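(* Let $\nu\ge0$, $\Psi_\nu(x)=I_{\nu+1}(x)/I_\nu(x)$ and $$\xi_\nu(x)=\frac{\log\left(1-\frac{2(\nu+1)}{x}\Psi_\nu(x)\right)}{\log\Psi_\nu(x)}.$$ Then $$\lim_{x\to\infty}\xi_\nu(x)=\frac{4(\nu+1)}{2\nu+1}.$$
   Context: $I_\nu$ denotes the modified Bessel function of the first kind of order $\nu$. *)

theory Defs
  imports "HOL-Analysis.Analysis"
begin

definition besselI :: "real \<Rightarrow> real \<Rightarrow> real" where
  "besselI nu x = (\<Sum>k. (x / 2) powr (2 * real k + nu) / (fact k * Gamma (real k + nu + 1)))"

definition besselPsi :: "real \<Rightarrow> real \<Rightarrow> real" where
  "besselPsi nu x = besselI (nu + 1) x / besselI nu x"

definition besselXi :: "real \<Rightarrow> real \<Rightarrow> real" where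
  "besselXi nu x = ln (1 - 2 * (nu + 1) / x * besselPsi nu x) / ln (besselPsi nu x)"

end

theory Submission
  imports Defs
begin

definition cf :: "real \<Rightarrow> nat \<Rightarrow> real" where
  "cf m k = 1 / (fact k * Gamma (real k + m + 1))"

definition Fs :: "real \<Rightarrow> real \<Rightarrow> real" where
  "Fs m z = (\<Sum>k. cf m k * z ^ k)"

lemma aux: fixes F G a m :: real assumes "F>0" "G>0" "a \<ge> 0" "m \<ge> 0"
 shows "1/(((a+1)*F)*G) - (m+1)*(1/(((a+1)*F)*((a+m+2)*G))) = 1/(F*((a+m+2)*G))"
proof -
  define u where "u = 1/(F*G)"
  define b where "b = a+m+2"
  define c where "c = a+1"
  have p: "c > 0" "b > 0" "b = c + m + 1" using assms unfolding b_def c_def by auto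
  have e: "1/(((a+1)*F)*G) = u/c" "1/(((a+1)*F)*((a+m+2)*G)) = u/(c*b)"
     "1/(F*((a+m+2)*G)) = u/b" unfolding u_def b_def c_def by (simp_all add: ac_simps)
  have 1: "u/c = (u*b)/(c*b)" using p by simp
  have 2: "u*b - (m+1)*u = u*c" by (simp add: p(3) algebra_simps)
  have "u/c - (m+1)*(u/(c*b)) = (u*b - (m+1)*u)/(c*b)" unfolding 1 by (simp add: diff_divide_distrib)
  also have "\<dots> = u/b" unfolding 2 using p by simp
  finally show ?thesis unfolding e .
qed

lemma aux2: fixes F a :: real assumes "a \<noteq> 0"
 shows "a * (1/(a*F)) = 1/F"
  using assms by simp

lemma Gamma_succ: "(y::real) > 0 \<Longrightarrow> Gamma (y + 1) = y * Gamma y"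
  by (rule Gamma_plus1) (auto dest: nonpos_Ints_nonpos)

lemma cf_pos: "m \<ge> 0 \<Longrightarrow> cf m k > 0"
  unfolding cf_def by (auto intro!: divide_pos_pos mult_pos_pos)

lemma cf_Suc: assumes "m \<ge> 0" shows "cf m (Suc k) = cf m k / ((real k + 1) * (real k + m + 1))"
proof -
  have "Gamma (real (Suc k) + m + 1) = (real k + m + 1) * Gamma (real k + m + 1)"
    using Gamma_succ[of "real k + m + 1"] assms by (simp add: add_ac)
  moreover have "Gamma (real k + m + 1) > 0" using assms by auto
  ultimately show ?thesis unfolding cf_def by (simp add: field_simps)
qed

lemma cf_summable: assumes "m \<ge> 0" shows "summable (\<lambda>k. cf m k * z ^ k)"
proof (rule summable_ratio_test[of "1/2" "nat \<lceil>2 * \<bar>z\<bar>\<rceil>"])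
  fix n assume n: "n \<ge> nat \<lceil>2 * \<bar>z\<bar>\<rceil>"
  have hn: "real n \<ge> 2 * \<bar>z\<bar>" using n by linarith
  have p: "cf m n > 0" using cf_pos assms by auto
  have d: "(real n + 1) * (real n + m + 1) \<ge> 2 * \<bar>z\<bar>"
  proof -
    have "real n + 1 \<le> (real n + 1) * (real n + m + 1)"
      using mult_left_mono[of 1 "real n + m + 1" "real n + 1"] assms by simp
    then show ?thesis using hn by linarith
  qed
  have "norm (cf m (Suc n) * z ^ Suc n) = cf m n * \<bar>z\<bar>^n * (\<bar>z\<bar> / ((real n + 1) * (real n + m + 1)))"
    using p assms by (simp add: cf_Suc abs_mult power_abs field_simps)
  also have "\<dots> \<le> cf m n * \<bar>z\<bar>^n * (1/2)"
  proof (rule mult_left_mono)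
    show "\<bar>z\<bar> / ((real n + 1) * (real n + m + 1)) \<le> 1/2"
      using d assms by (subst divide_le_eq) (auto simp: add_pos_nonneg)
  qed (use p in auto)
  also have "\<dots> = 1/2 * norm (cf m n * z ^ n)" using p by (simp add: abs_mult power_abs)
  finally show "norm (cf m (Suc n) * z ^ Suc n) \<le> 1/2 * norm (cf m n * z ^ n)" .
qed simp

lemma diffs_cf: assumes "m \<ge> 0" shows "diffs (cf m) = cf (m + 1)"
proof
  fix n
  define G where "G = Gamma (real n + (m + 1) + 1)"
  have G: "G > 0" unfolding G_def using assms by auto
  have "Gamma (real (Suc n) + m + 1) = G" unfolding G_def by (simp add: add_ac)
  then show "diffs (cf m) n = cf (m + 1) n"
    unfolding diffs_def cf_def G_def[symmetric] fact_Suc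
    using aux2[of "of_nat (Suc n)" "fact n * G"] by (simp only: mult.assoc)
qed

lemma Fs_deriv: assumes "m \<ge> 0" shows "(Fs m has_field_derivative Fs (m + 1) z) (at z)"
proof -
  have "((\<lambda>x. \<Sum>n. cf m n * x^n) has_field_derivative (\<Sum>n. diffs (cf m) n * z^n)) (at z)"
    by (rule termdiffs_strong_converges_everywhere) (rule cf_summable[OF assms])
  then show ?thesis unfolding Fs_def[abs_def] diffs_cf[OF assms] by simp
qed

lemma Fs_pos: assumes "m \<ge> 0" "z > 0" shows "Fs m z > 0"
  unfolding Fs_def using assms cf_summable[OF assms(1)] cf_pos[OF assms(1)]
  by (intro suminf_pos) auto

lemma cf_rec: assumes "m \<ge> 0"
  shows "cf m (Suc k) - (m + 1) * cf (m + 1) (Suc k) = cf (m + 2) k"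
proof -
  define G where "G = Gamma (real k + m + 2)"
  have G: "G > 0" using assms unfolding G_def by auto
  have g1: "Gamma (real (Suc k) + m + 1) = G" unfolding G_def by (simp add: add_ac)
  have g2: "Gamma (real (Suc k) + (m + 1) + 1) = (real k + m + 2) * G"
    unfolding G_def using Gamma_succ[of "real k + m + 2"] assms
    by (simp add: add_ac)
  have g3: "Gamma (real k + (m + 2) + 1) = (real k + m + 2) * G"
    using g2 by (simp add: add_ac)
  have p: "real k + m + 2 > 0" using assms by simp
  have s: "(of_nat (Suc k) :: real) = real k + 1" by simp
  show ?thesis unfolding cf_def g1 g2 g3 unfolding fact_Suc s
    using aux[of "fact k" G "real k" m] G assms by simp
qed

lemma cf_rec0: assumes "m \<ge> 0" shows "cf m 0 = (m + 1) * cf (m + 1) 0"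
proof -
  have g: "Gamma (real 0 + (m + 1) + 1) = (m + 1) * Gamma (m + 1)" using Gamma_succ[of "m+1"] assms by simp
  have g0: "Gamma (real 0 + m + 1) = Gamma (m + 1)" by simp
  show ?thesis unfolding cf_def g g0 using aux2[of "m+1" "Gamma (m+1)"] assms by simp
qed

lemma Fs_rec: assumes "m \<ge> 0"
  shows "Fs m z - z * Fs (m + 2) z = (m + 1) * Fs (m + 1) z"
proof -
  define g where "g k = cf m k * z ^ k - (m + 1) * (cf (m + 1) k * z ^ k)" for k
  have s1: "g sums (Fs m z - (m + 1) * Fs (m + 1) z)"
    unfolding g_def Fs_def
    by (intro sums_diff sums_mult summable_sums cf_summable) (use assms in auto)
  have "(\<lambda>k. z * (cf (m + 2) k * z ^ k)) sums (z * Fs (m + 2) z)"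
    unfolding Fs_def by (intro sums_mult summable_sums cf_summable) (use assms in auto)
  moreover have "(\<lambda>k. z * (cf (m + 2) k * z ^ k)) = (\<lambda>k. g (Suc k))"
    unfolding g_def by (auto simp: cf_rec[OF assms, symmetric] algebra_simps)
  ultimately have "g sums (z * Fs (m + 2) z + g 0)" using sums_Suc_iff by metis
  moreover have "g 0 = 0" unfolding g_def using cf_rec0[OF assms] by simp
  ultimately have "g sums (z * Fs (m + 2) z)" by simp
  with s1 have "Fs m z - (m + 1) * Fs (m + 1) z = z * Fs (m + 2) z" using sums_unique2 by blast
  then show ?thesis by simp
qed

lemma besselI_Fs: assumes "m \<ge> 0" "x > 0"
  shows "besselI m x = (x/2) powr m * Fs m ((x/2)^2)"
proof -
  have "besselI m x = (\<Sum>k. (x/2) powr m * (cf m k * ((x/2)^2) ^ k))"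
    unfolding besselI_def cf_def
  proof (intro suminf_cong)
    fix k
    have "(x/2) powr (2 * real k + m) = (x/2) powr m * (x/2) powr (real (2*k))"
      by (simp add: powr_add)
    also have "(x/2) powr (real (2*k)) = (x/2)^(2*k)" by (rule powr_realpow) (use assms in simp)
    also have "(x/2)^(2*k) = ((x/2)^2)^k" by (simp add: power_mult)
    finally show "(x/2) powr (2 * real k + m) / (fact k * Gamma (real k + m + 1)) =
      (x/2) powr m * (1 / (fact k * Gamma (real k + m + 1)) * ((x/2)^2) ^ k)" by simp
  qed
  also have "\<dots> = (x/2) powr m * Fs m ((x/2)^2)"
    unfolding Fs_def by (rule suminf_mult) (rule cf_summable[OF assms(1)])
  finally show ?thesis .
qed


lemma barrier:
  fixes phi phi' :: "real \<Rightarrow> real"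
  assumes d: "\<delta> > 0"
    and der: "\<And>x. x \<ge> X0 \<Longrightarrow> (phi has_real_derivative phi' x) (at x)"
    and neg: "\<And>x. x \<ge> X0 \<Longrightarrow> phi x \<ge> a \<Longrightarrow> phi' x \<le> -\<delta>"
  shows "\<exists>X. \<forall>x\<ge>X. phi x \<le> a"
proof -
  have cont: "continuous_on {u..v} phi" if "u \<ge> X0" for u v
  proof (intro continuous_at_imp_continuous_on ballI)
    fix y assume "y \<in> {u..v}"
    then show "isCont phi y" using that by (intro DERIV_isCont[OF der]) auto
  qed
  obtain x1 where x1: "x1 \<ge> X0" "phi x1 \<le> a"
  proof (rule ccontr)
    assume "\<not> thesis"
    then have gt: "\<And>x. x \<ge> X0 \<Longrightarrow> phi x > a" using that by force
    define x where "x = X0 + (phi X0 - a) / \<delta> + 1"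
    have xX: "x > X0" using gt[of X0] d unfolding x_def by (simp add: field_simps)
    obtain z where z: "z > X0" "z < x" "phi x - phi X0 = (x - X0) * phi' z"
      using MVT2[OF xX, of phi phi'] der by auto
    have "phi' z \<le> -\<delta>" using neg[of z] gt[of z] z by auto
    then have "(x - X0) * phi' z \<le> (x - X0) * (-\<delta>)" using xX by (intro mult_left_mono) auto
    then have "phi x \<le> phi X0 - (x - X0) * \<delta>" using z by simp
    also have "(x - X0) * \<delta> = phi X0 - a + \<delta>" unfolding x_def using d by (simp add: field_simps)
    finally have "phi x < a" using d by simp
    with gt[of x] xX show False by simp
  qed
  have "\<forall>x\<ge>x1. phi x \<le> a"
  proof (rule ccontr)
    assume "\<not> (\<forall>x\<ge>x1. phi x \<le> a)"
    then obtain x where x: "x \<ge> x1" "phi x > a" by (auto simp: not_le)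
    define S where "S = {t \<in> {x1..x}. phi t \<le> a}"
    have "x1 \<in> S" using x x1 unfolding S_def by auto
    moreover have "closed S" unfolding S_def
      by (intro continuous_on_closed_Collect_le cont x1 continuous_on_const closed_atLeastAtMost)
    moreover have "bdd_above S" unfolding S_def by (auto intro: bdd_aboveI[of _ x])
    ultimately have sS: "Sup S \<in> S" using closed_contains_Sup by blast
    define s where "s = Sup S"
    have s: "s \<ge> x1" "s \<le> x" "phi s \<le> a" using sS unfolding s_def S_def by auto
    have sx: "s < x" using s x by (cases "s = x") auto
    have after: "phi t > a" if "s < t" "t \<le> x" for t
    proof (rule ccontr)
      assume "\<not> phi t > a"
      then have "t \<in> S" using that s unfolding S_def by auto
      then have "t \<le> Sup S" using \<open>bdd_above S\<close> by (rule cSup_upper)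
      with that show False unfolding s_def by simp
    qed
    have "phi s > phi x"
    proof (rule DERIV_neg_imp_decreasing_open[OF sx])
      fix t assume t: "s < t" "t < x"
      show "\<exists>y. (phi has_real_derivative y) (at t) \<and> y < 0"
        using der[of t] neg[of t] after[of t] t s x1 d by (intro exI[of _ "phi' t"]) force
    qed (rule cont, use s x1 in simp)
    with s x show False by simp
  qed
  then show ?thesis by blast
qed


lemma riccati:
  fixes f :: "real \<Rightarrow> real" and c :: real
  assumes c: "c \<ge> 1" and pos: "\<And>x. x > 0 \<Longrightarrow> f x > 0"
    and der: "\<And>x. x > 0 \<Longrightarrow> (f has_real_derivative (1 - c * f x / x - (f x)^2)) (at x)"
  shows "((\<lambda>x. x * (1 - f x)) \<longlongrightarrow> c/2) at_top"
proof -
  define s where "s x = sqrt (c^2 + 4*x^2)" for x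
  define r where "r x = sqrt ((c/x)^2 + 4)" for x
  define fs where "fs x = (s x - c)/(2*x)" for x
  define D where "D x = 2*x/s x - fs x" for x
  define phi where "phi x = x * f x - (s x - c)/2" for x
  define phi' where "phi' x = f x + x*(1 - c*f x/x - (f x)^2) - 2*x/s x" for x
  have hpos: "0 < c^2 + 4*x^2" for x
  proof -
    have "c^2 > 0" using c by simp
    then show ?thesis by (intro add_pos_nonneg) auto
  qed
  have spos: "s x > 0" for x unfolding s_def using hpos by simp
  have ss: "(s x)^2 = c^2 + 4*x^2" for x unfolding s_def using hpos by simp
  have rpos: "r x > 0" for x unfolding r_def by (smt (verit) real_sqrt_gt_zero zero_le_power2)
  have rr: "(r x)^2 = (c/x)^2 + 4" for x unfolding r_def by (simp add: add_nonneg_nonneg)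
  have sr: "s x = x * r x" if x: "x > 0" for x
  proof -
    have "c^2 + 4*x^2 = x^2 * ((c/x)^2 + 4)" using x by (simp add: field_simps power2_eq_square)
    then have "s x = sqrt (x^2) * r x" unfolding s_def r_def by (simp add: real_sqrt_mult)
    then show ?thesis using x by simp
  qed
  have cx: "((\<lambda>x. c / x) \<longlongrightarrow> 0) at_top"
    by (intro tendsto_divide_0[OF tendsto_const] filterlim_at_top_imp_at_infinity filterlim_ident)
  have r_lim: "(r \<longlongrightarrow> 2) at_top"
  proof -
    have "((\<lambda>x. sqrt ((c/x)^2 + 4)) \<longlongrightarrow> sqrt (0^2 + 4)) at_top"
      by (intro tendsto_intros cx)
    then show ?thesis unfolding r_def[abs_def] by simp
  qed
  have ev_pos: "eventually (\<lambda>x. x > (0::real)) at_top" by (rule eventually_gt_at_top)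
  have fs_lim: "(fs \<longlongrightarrow> 1) at_top"
  proof -
    have "((\<lambda>x. (r x - c/x)/2) \<longlongrightarrow> (2 - 0)/2) at_top" by (intro tendsto_intros r_lim cx) auto
    moreover have "eventually (\<lambda>x. (r x - c/x)/2 = fs x) at_top"
      using ev_pos by eventually_elim (auto simp: fs_def sr field_simps)
    ultimately show ?thesis by (simp add: tendsto_cong)
  qed
  have D_lim: "(D \<longlongrightarrow> 0) at_top"
  proof -
    have "((\<lambda>x. 2 / r x - fs x) \<longlongrightarrow> 2/2 - 1) at_top" by (intro tendsto_intros r_lim fs_lim) simp
    moreover have "eventually (\<lambda>x. 2 / r x - fs x = D x) at_top"
      using ev_pos by eventually_elim (use rpos in \<open>auto simp: D_def sr field_simps\<close>)
    ultimately show ?thesis by (simp add: tendsto_cong)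
  qed
  have phi_der: "(phi has_real_derivative phi' x) (at x)" if x: "x > 0" for x
  proof -
    have "((\<lambda>x. x * f x - (sqrt (c^2 + 4*x^2) - c)/2) has_real_derivative phi' x) (at x)"
      unfolding phi'_def s_def using x spos[of x] hpos[of x]
      by (auto intro!: derivative_eq_intros der simp: s_def field_simps power2_eq_square)
    then show ?thesis unfolding phi_def[abs_def] s_def .
  qed
  have ident: "phi' x = - phi x * (f x + fs x + (c - 1)/x) - D x" if x: "x > 0" for x
  proof -
    have key: "x * (fs x)^2 + c * fs x = x"
    proof -
      have "x * (fs x)^2 + c * fs x = ((s x)^2 - c^2) / (4*x)"
        unfolding fs_def using x by (simp add: field_simps power2_eq_square)
      also have "\<dots> = x" unfolding ss using x by (simp add: power2_eq_square)
      finally show ?thesis .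
    qed
    have ph: "phi x = x * f x - x * fs x" unfolding phi_def fs_def using x by simp
    have k1: "x * x = x * (x * (fs x)^2 + c * fs x)" using key by simp
    have k2: "x * x = c * (x * fs x) + x * (x * (fs x * fs x))"
      using k1 by (simp add: algebra_simps power2_eq_square)
    show ?thesis unfolding phi'_def ph D_def using x key k2
      by (simp add: field_simps power2_eq_square)
  qed
  have phi_lim: "(phi \<longlongrightarrow> 0) at_top"
  proof (rule tendstoI)
    fix e :: real assume e: "e > 0"
    have "eventually (\<lambda>x. x > 0 \<and> fs x \<ge> 1/2 \<and> \<bar>D x\<bar> \<le> e/8) at_top"
    proof (intro eventually_conj ev_pos)
      show "eventually (\<lambda>x. fs x \<ge> 1/2) at_top"
        using order_tendstoD(1)[OF fs_lim, of "1/2"] by (auto elim: eventually_mono)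
      have "eventually (\<lambda>x. dist (D x) 0 < e/8) at_top" using tendstoD[OF D_lim, of "e/8"] e by simp
      then show "eventually (\<lambda>x. \<bar>D x\<bar> \<le> e/8) at_top" by (auto elim: eventually_mono)
    qed
    then obtain X0 where X0: "\<And>x. x \<ge> X0 \<Longrightarrow> x > 0 \<and> fs x \<ge> 1/2 \<and> \<bar>D x\<bar> \<le> e/8"
      by (auto simp: eventually_at_top_linorder)
    have A: "f x + fs x + (c - 1)/x \<ge> 1/2" if "x \<ge> X0" for x
      using X0[OF that] pos[of x] c by (smt (verit) divide_nonneg_pos)
    have up: "\<exists>X. \<forall>x\<ge>X. phi x \<le> e/2"
    proof (rule barrier[of "e/8" X0 phi phi'])
      fix x assume x: "x \<ge> X0" and p: "phi x \<ge> e/2"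
      have "phi x * (f x + fs x + (c - 1)/x) \<ge> (e/2) * (1/2)"
        using A[OF x] p e by (intro mult_mono) auto
      then show "phi' x \<le> - (e/8)" using ident[of x] X0[OF x] by auto
    qed (use e X0 phi_der in auto)
    have lo: "\<exists>X. \<forall>x\<ge>X. - phi x \<le> e/2"
    proof (rule barrier[of "e/8" X0 "\<lambda>x. - phi x" "\<lambda>x. - phi' x"])
      fix x assume x: "x \<ge> X0" and p: "- phi x \<ge> e/2"
      have "(- phi x) * (f x + fs x + (c - 1)/x) \<ge> (e/2) * (1/2)"
        using A[OF x] p e by (intro mult_mono) auto
      then show "- phi' x \<le> - (e/8)" using ident[of x] X0[OF x] by auto
    qed (use e X0 phi_der in \<open>auto intro!: derivative_eq_intros\<close>)
    from up lo obtain X1 X2 where "\<forall>x\<ge>X1. phi x \<le> e/2" "\<forall>x\<ge>X2. - phi x \<le> e/2" by blast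
    then have "\<forall>x\<ge>max X1 X2. dist (phi x) 0 < e" using e by fastforce
    then show "eventually (\<lambda>x. dist (phi x) 0 < e) at_top"
      unfolding eventually_at_top_linorder by blast
  qed
  have E: "x - (s x - c)/2 = c/2 - (c/x) * (c / (2*(2 + r x)))" if x: "x > 0" for x
  proof -
    have r2: "2 + r x > 0" using rpos[of x] by simp
    have e1: "(2 - r x) * (2 + r x) = - ((c/x)^2)" using rr[of x] by (simp add: algebra_simps power2_eq_square)
    have "2 + r x \<noteq> 0" using r2 by simp
    then have "2 - r x = - ((c/x)^2) / (2 + r x)" using e1 nonzero_eq_divide_eq by metis
    then have e2: "x * (2 - r x) / 2 = x * (- ((c/x)^2) / (2 + r x)) / 2" by simp
    define q where "q = 2 + r x"
    define u where "u = c / x"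
    have q: "q \<noteq> 0" unfolding q_def using r2 by simp
    have xu: "x * u = c" unfolding u_def using x by simp
    have "x * (- (u^2) / q) / 2 = - u * (c / (2*q))"
      using q by (simp add: power2_eq_square xu[symmetric] field_simps)
    then have "x * (2 - r x) / 2 = - (c/x) * (c / (2*(2 + r x)))"
      unfolding e2 q_def u_def .
    moreover have "x - (s x - c)/2 = c/2 + x * (2 - r x) / 2" using sr[OF x] by (simp add: field_simps)
    ultimately show ?thesis by simp
  qed
  have "((\<lambda>x. (c/2 - (c/x) * (c / (2*(2 + r x)))) - phi x) \<longlongrightarrow> (c/2 - 0 * (c/(2*(2+2)))) - 0) at_top"
    by (intro tendsto_intros cx r_lim phi_lim) simp
  moreover have "eventually (\<lambda>x. (c/2 - (c/x) * (c / (2*(2 + r x)))) - phi x = x * (1 - f x)) at_top"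
    using ev_pos
  proof eventually_elim
    case (elim x)
    show ?case unfolding E[OF elim, symmetric] phi_def by (simp add: algebra_simps)
  qed
  ultimately show ?thesis by (simp add: tendsto_cong)
qed


lemma psi_Fs: assumes m: "m \<ge> 0" and x: "x > 0"
  shows "besselPsi m x = x/2 * Fs (m + 1) ((x/2)^2) / Fs m ((x/2)^2)"
proof -
  have p: "(x/2) powr m > 0" using x by simp
  have m1: "m + 1 \<ge> 0" using m by simp
  have e: "(x/2) powr (m+1) = (x/2) powr m * (x/2)" using x by (simp add: powr_add)
  have "besselPsi m x = ((x/2) powr m * (x/2) * Fs (m + 1) ((x/2)^2)) / ((x/2) powr m * Fs m ((x/2)^2))"
    unfolding besselPsi_def besselI_Fs[OF m x] besselI_Fs[OF m1 x] e ..
  also have "\<dots> = x/2 * Fs (m + 1) ((x/2)^2) / Fs m ((x/2)^2)" using p by (simp add: field_simps)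
  finally show ?thesis .
qed

lemma Fs_comp_deriv: assumes m: "m \<ge> 0"
  shows "((\<lambda>x. Fs m ((x/2)^2)) has_real_derivative Fs (m + 1) ((x/2)^2) * (x/2)) (at x)"
proof -
  have inner: "((\<lambda>x::real. (x/2)^2) has_real_derivative x/2) (at x)"
    by (auto intro!: derivative_eq_intros simp: field_simps power2_eq_square)
  show ?thesis using DERIV_chain2[OF Fs_deriv[OF m] inner] by simp
qed

lemma alg_ric:
  fixes P Q R x m :: real
  assumes P: "P \<noteq> 0" and x: "x \<noteq> 0" and rec: "P - (x/2)^2 * R = (m + 1) * Q"
  shows "((1/2 * Q + R * (x/2) * (x/2)) * P - x/2 * Q * (Q * (x/2))) / (P * P)
     = 1 - (2*m+1) * (x/2 * Q / P) / x - (x/2 * Q / P)^2"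
proof -
  have R: "R = (P - (m+1)*Q) / (x/2)^2" using rec x by (simp add: field_simps)
  show ?thesis unfolding R using P x by (simp add: field_simps power2_eq_square)
qed

lemma psi_deriv: assumes m: "m \<ge> 0" and x: "x > 0"
  shows "(besselPsi m has_real_derivative
           (1 - (2*m+1) * besselPsi m x / x - (besselPsi m x)^2)) (at x)"
proof -
  define P where "P = Fs m ((x/2)^2)"
  define Q where "Q = Fs (m+1) ((x/2)^2)"
  define R where "R = Fs (m+2) ((x/2)^2)"
  have z: "(x/2)^2 > 0" using x by simp
  have P: "P > 0" unfolding P_def using Fs_pos[OF m z] .
  have rec: "P - (x/2)^2 * R = (m + 1) * Q" unfolding P_def Q_def R_def by (rule Fs_rec[OF m])
  have m1: "m + 1 \<ge> 0" using m by simp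
  have dQ: "((\<lambda>x. Fs (m+1) ((x/2)^2)) has_real_derivative R * (x/2)) (at x)"
    using Fs_comp_deriv[OF m1, of x] unfolding R_def by (simp add: add.assoc)
  have dP: "((\<lambda>x. Fs m ((x/2)^2)) has_real_derivative Q * (x/2)) (at x)"
    using Fs_comp_deriv[OF m, of x] unfolding Q_def .
  have dh: "((\<lambda>x::real. x/2) has_real_derivative 1/2) (at x)"
    by (auto intro!: derivative_eq_intros)
  have Pne: "Fs m ((x/2)^2) \<noteq> 0" using P unfolding P_def by simp
  from DERIV_divide[OF DERIV_mult[OF dh dQ] dP Pne]
  have raw: "((\<lambda>x. (x/2 * Fs (m + 1) ((x/2)^2)) / Fs m ((x/2)^2)) has_real_derivative
        ((1/2 * Q + R * (x/2) * (x/2)) * P - x/2 * Q * (Q * (x/2))) / (P * P)) (at x)"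
    unfolding P_def Q_def .
  have "((\<lambda>x. (x/2 * Fs (m + 1) ((x/2)^2)) / Fs m ((x/2)^2)) has_real_derivative
        1 - (2*m+1) * (x/2 * Q / P) / x - (x/2 * Q / P)^2) (at x)"
    using P x by (intro DERIV_cong[OF raw] alg_ric[OF _ _ rec]) auto
  then have "(besselPsi m has_real_derivative
        1 - (2*m+1) * (x/2 * Q / P) / x - (x/2 * Q / P)^2) (at x)"
    by (rule has_field_derivative_transform_within_open[of _ _ _ "{0<..}"])
       (use x psi_Fs[OF m] in auto)
  moreover have "besselPsi m x = x/2 * Q / P" unfolding P_def Q_def using psi_Fs[OF m x] by simp
  ultimately show ?thesis by simp
qed

lemma psi_pos: assumes m: "m \<ge> 0" and x: "x > 0" shows "besselPsi m x > 0"
proof -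
  have z: "(x/2)^2 > 0" using x by simp
  have "m + 1 \<ge> 0" using m by simp
  then show ?thesis unfolding psi_Fs[OF m x] using Fs_pos[OF m z] Fs_pos[OF _ z, of "m+1"] x
    by simp
qed

lemma psi_asymp: assumes m: "m \<ge> 0"
  shows "((\<lambda>x. x * ln (besselPsi m x)) \<longlongrightarrow> - (2*m+1)/2) at_top"
proof -
  have h: "((\<lambda>x. x * (1 - besselPsi m x)) \<longlongrightarrow> (2*m+1)/2) at_top"
    by (rule riccati) (use m psi_pos psi_deriv in auto)
  have ev: "eventually (\<lambda>x. x > (0::real)) at_top" by (rule eventually_gt_at_top)
  have inv: "((\<lambda>x::real. 1 / x) \<longlongrightarrow> 0) at_top"
    by (intro tendsto_divide_0[OF tendsto_const] filterlim_at_top_imp_at_infinity filterlim_ident)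
  have "((\<lambda>x. 1 - (x * (1 - besselPsi m x)) * (1/x)) \<longlongrightarrow> 1 - (2*m+1)/2 * 0) at_top"
    by (intro tendsto_intros h inv)
  moreover have "eventually (\<lambda>x. 1 - (x * (1 - besselPsi m x)) * (1/x) = besselPsi m x) at_top"
    using ev by eventually_elim simp
  ultimately have psi1: "(besselPsi m \<longlongrightarrow> 1) at_top" by (simp add: tendsto_cong)
  have lo: "((\<lambda>x. - (x * (1 - besselPsi m x)) / besselPsi m x) \<longlongrightarrow> - (2*m+1)/2) at_top"
  proof -
    have "((\<lambda>x. - (x * (1 - besselPsi m x)) / besselPsi m x) \<longlongrightarrow> - ((2*m+1)/2) / 1) at_top"
      by (rule tendsto_divide[OF tendsto_minus[OF h] psi1]) simp
    then show ?thesis by (simp only: div_by_1 minus_divide_left)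
  qed
  have hi: "((\<lambda>x. - (x * (1 - besselPsi m x))) \<longlongrightarrow> - (2*m+1)/2) at_top"
    using tendsto_minus[OF h] by (simp only: minus_divide_left)
  show ?thesis
  proof (rule tendsto_sandwich[OF _ _ _ hi])
    show "eventually (\<lambda>x. - (x * (1 - besselPsi m x)) / besselPsi m x \<le> x * ln (besselPsi m x)) at_top"
      using ev
    proof eventually_elim
      case (elim x)
      define y where "y = besselPsi m x"
      have y: "y > 0" unfolding y_def using psi_pos[OF m elim] .
      have "ln (1/y) \<le> 1/y - 1" using y by (intro ln_le_minus_one) simp
      then have "- ((1 - y) / y) \<le> ln y" using y by (simp add: ln_div field_simps)
      then have "x * (- ((1 - y) / y)) \<le> x * ln y" using elim by (intro mult_left_mono) auto
      then show ?case unfolding y_def[symmetric] by simp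
    qed
    show "eventually (\<lambda>x. x * ln (besselPsi m x) \<le> - (x * (1 - besselPsi m x))) at_top"
      using ev
    proof eventually_elim
      case (elim x)
      define y where "y = besselPsi m x"
      have y: "y > 0" unfolding y_def using psi_pos[OF m elim] .
      have "ln y \<le> y - 1" using y by (rule ln_le_minus_one)
      then have "x * ln y \<le> x * (y - 1)" using elim by (intro mult_left_mono) auto
      then show ?case unfolding y_def[symmetric] by (simp add: algebra_simps)
    qed
  qed (use lo in simp)
qed

theorem mainTheorem7:
  fixes nu :: real
  assumes "nu \<ge> 0"
  shows "(besselXi nu \<longlongrightarrow> 4 * (nu + 1) / (2 * nu + 1)) at_top"
proof -
  have n1: "nu + 1 \<ge> 0" using assms by simp
  have a: "((\<lambda>x. x * ln (besselPsi nu x)) \<longlongrightarrow> - (2*nu+1)/2) at_top"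
    by (rule psi_asymp[OF assms])
  have b: "((\<lambda>x. x * ln (besselPsi (nu+1) x)) \<longlongrightarrow> - (2*(nu+1)+1)/2) at_top"
    by (rule psi_asymp[OF n1])
  have lim: "((\<lambda>x. (x * ln (besselPsi nu x) + x * ln (besselPsi (nu+1) x)) / (x * ln (besselPsi nu x)))
     \<longlongrightarrow> (- (2*nu+1)/2 + - (2*(nu+1)+1)/2) / (- (2*nu+1)/2)) at_top"
    by (intro tendsto_intros a b) (use assms in simp)
  have val: "(- (2*nu+1)/2 + - (2*(nu+1)+1)/2) / (- (2*nu+1)/2) = 4 * (nu + 1) / (2 * nu + 1)"
    using assms by (simp add: field_simps)
  have ev: "eventually (\<lambda>x. x > (0::real)) at_top" by (rule eventually_gt_at_top)
  have "eventually (\<lambda>x. (x * ln (besselPsi nu x) + x * ln (besselPsi (nu+1) x)) / (x * ln (besselPsi nu x))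
          = besselXi nu x) at_top"
    using ev
  proof eventually_elim
    case (elim x)
    define z where "z = (x/2)^2"
    have z: "z > 0" unfolding z_def using elim by simp
    define P where "P = Fs nu z"
    define Q where "Q = Fs (nu+1) z"
    define R where "R = Fs (nu+2) z"
    have P: "P > 0" unfolding P_def using Fs_pos[OF assms z] .
    have Q: "Q > 0" unfolding Q_def using Fs_pos[OF n1 z] .
    have rec: "P - z * R = (nu + 1) * Q" unfolding P_def Q_def R_def by (rule Fs_rec[OF assms])
    have p1: "besselPsi nu x = x/2 * Q / P" unfolding P_def Q_def z_def using psi_Fs[OF assms elim] .
    have p2: "besselPsi (nu+1) x = x/2 * R / Q" unfolding R_def Q_def z_def
      using psi_Fs[OF n1 elim] by (simp add: add.assoc)
    have R: "R = (P - (nu+1)*Q) / z" using rec z by (simp add: field_simps)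
    have prod: "1 - 2 * (nu + 1) / x * besselPsi nu x = besselPsi nu x * besselPsi (nu+1) x"
      unfolding p1 p2 R z_def using P Q elim by (simp add: field_simps power2_eq_square)
    have pp: "besselPsi nu x > 0" "besselPsi (nu+1) x > 0" using psi_pos assms n1 elim by auto
    have "besselXi nu x = (ln (besselPsi nu x) + ln (besselPsi (nu+1) x)) / ln (besselPsi nu x)"
      unfolding besselXi_def prod using pp by (simp add: ln_mult)
    also have "\<dots> = (x * ln (besselPsi nu x) + x * ln (besselPsi (nu+1) x)) / (x * ln (besselPsi nu x))"
      using elim by (simp add: distrib_left[symmetric])
    finally show ?case by simp
  qed
  with lim show ?thesis unfolding val by (simp add: tendsto_cong)
qed


end
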